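(* Let $n\geq 3$ and suppose the dihedral group $G=\mathrm{D}_{2n}$ of order $2n$ has the $m$-DCI property for a positive integer $m$. If $p$ is a prime divisor of $2n$ such that $p+1\leq m\leq n-1$, then a Sylow $p$-subgroup $G_p$ of $G$ is isomorphic to $\mathbb{Z}_p$ (the cyclic group of order $p$).
   Context: For a group $G$ and a subset $S\subseteq G$ with $1\notin S$, the Cayley digraph $\mathrm{Cay}(G,S)$ has vertex set $G$ and arc set $\{(g,sg)\mid g\in G,\ s\in S\}$. $\mathrm{Cay}(G,S)$ is a CI-digraph if for every $T\subseteq G$ with $1\notin T$ and $\mathrm{Cay}(G,T)\cong\mathrm{Cay}(G,S)$ there is $\alpha\in\mathrm{Aut}(G)$ with $S^\alpha=T$. For a positive integer $m$, $G$ has the $m$-DCI property if every Cayley digraph $\mathrm{Cay}(G,S)$ with $|S|=m$ is a CI-digraph. *)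

theory Defs
  imports "HOL-Computational_Algebra.Primes" "HOL-Algebra.Elementary_Groups"
begin

text \<open>Dihedral group of order 2n: element (i,b) stands for r^i s^b, with
  s r s = r^{-1}. Hence (i,b)(j,c) = (i + (-1)^b j mod n, b xor c).\<close>
definition dihedral_group :: "nat \<Rightarrow> (nat \<times> bool) monoid" where
  "dihedral_group n =
     \<lparr> carrier = {0..<n} \<times> UNIV,
       mult = (\<lambda>(i, b) (j, c). ((i + (if b then (n - j) mod n else j)) mod n, b \<noteq> c)),
       one = (0, False) \<rparr>"

definition cayley_arcs :: "('a, 'b) monoid_scheme \<Rightarrow> 'a set \<Rightarrow> ('a \<times> 'a) set" where
  "cayley_arcs G S = {(g, s \<otimes>\<^bsub>G\<^esub> g) | g s. g \<in> carrier G \<and> s \<in> S}"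

definition cayley_digraph_iso :: "('a, 'b) monoid_scheme \<Rightarrow> 'a set \<Rightarrow> 'a set \<Rightarrow> bool" where
  "cayley_digraph_iso G S T \<longleftrightarrow>
     (\<exists>f. bij_betw f (carrier G) (carrier G) \<and>
          (\<forall>x\<in>carrier G. \<forall>y\<in>carrier G.
             (x, y) \<in> cayley_arcs G S \<longleftrightarrow> (f x, f y) \<in> cayley_arcs G T))"

definition is_CI_digraph :: "('a, 'b) monoid_scheme \<Rightarrow> 'a set \<Rightarrow> bool" where
  "is_CI_digraph G S \<longleftrightarrow>
     (\<forall>T. T \<subseteq> carrier G \<and> \<one>\<^bsub>G\<^esub> \<notin> T \<and> cayley_digraph_iso G S T \<longrightarrow>
          (\<exists>\<alpha>\<in>iso G G. \<alpha> ` S = T))"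

definition has_m_DCI :: "('a, 'b) monoid_scheme \<Rightarrow> nat \<Rightarrow> bool" where
  "has_m_DCI G m \<longleftrightarrow>
     (\<forall>S. S \<subseteq> carrier G \<and> \<one>\<^bsub>G\<^esub> \<notin> S \<and> card S = m \<longrightarrow> is_CI_digraph G S)"

definition sylow_subgroup :: "('a, 'b) monoid_scheme \<Rightarrow> nat \<Rightarrow> 'a set \<Rightarrow> bool" where
  "sylow_subgroup G p P \<longleftrightarrow>
     subgroup P G \<and>
     (\<exists>k. card P = p ^ k \<and> p ^ k dvd order G \<and> \<not> p ^ (Suc k) dvd order G)"

end

theory Submission
  imports Defs "HOL-Algebra.Multiplicative_Group"
begin

lemma carrier_D[simp]: "carrier (dihedral_group n) = {0..<n} \<times> UNIV"
  by (simp add: dihedral_group_def)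
lemma one_D[simp]: "\<one>\<^bsub>dihedral_group n\<^esub> = (0, False)"
  by (simp add: dihedral_group_def)
lemma mult_D[simp]: "(i, b) \<otimes>\<^bsub>dihedral_group n\<^esub> (j, c) =
   ((i + (if b then (n - j) mod n else j)) mod n, b \<noteq> c)"
  by (simp add: dihedral_group_def)

lemma nat_eq_modI:
  fixes a b n :: nat
  assumes "a < n" "b < n" "int a mod int n = int b mod int n"
  shows "a = b"
  using assms by (metis mod_less of_nat_eq_iff of_nat_mod)

lemma int_sub_mod:
  fixes n a j :: nat
  assumes "j \<le> n + a"
  shows "int ((n + a - j) mod n) = (int a - int j) mod int n"
proof -
  have "int ((n + a - j) mod n) = int (n + a - j) mod int n" by (simp add: of_nat_mod)
  also have "\<dots> = ((int a - int j) + int n) mod int n" using assms by (simp add: of_nat_diff algebra_simps)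
  also have "\<dots> = (int a - int j) mod int n" by simp
  finally show ?thesis .
qed

lemma int_sub_mod0:
  fixes n j :: nat
  assumes "j \<le> n"
  shows "int ((n - j) mod n) = (- int j) mod int n"
  using int_sub_mod[of j n 0] assms by simp

lemma fst_mult_int:
  assumes "j < n"
  shows "int ((i + (if b then (n - j) mod n else j)) mod n) = (int i + (if b then - int j else int j)) mod int n"
proof (cases b)
  case True
  have "int ((i + (n - j) mod n) mod n) = (int i + int ((n - j) mod n)) mod int n"
    by (simp add: of_nat_mod)
  also have "\<dots> = (int i + (- int j) mod int n) mod int n" using assms int_sub_mod0[of j n] by simp
  also have "\<dots> = (int i + - int j) mod int n" by (simp add: mod_add_right_eq)
  finally show ?thesis using True by simp
next
  case False
  then show ?thesis by (simp add: of_nat_mod)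
qed

lemma group_D: assumes "0 < n" shows "group (dihedral_group n)"
proof (rule groupI)
  fix x y assume "x \<in> carrier (dihedral_group n)" "y \<in> carrier (dihedral_group n)"
  then show "x \<otimes>\<^bsub>dihedral_group n\<^esub> y \<in> carrier (dihedral_group n)"
    using assms by (cases x, cases y) auto
next
  show "\<one>\<^bsub>dihedral_group n\<^esub> \<in> carrier (dihedral_group n)" using assms by simp
next
  fix x y z assume xyz: "x \<in> carrier (dihedral_group n)" "y \<in> carrier (dihedral_group n)"
    "z \<in> carrier (dihedral_group n)"
  obtain i b where x: "x = (i,b)" by (cases x)
  obtain j c where y: "y = (j,c)" by (cases y)
  obtain k e where z: "z = (k,e)" by (cases z)
  have ijk: "i < n" "j < n" "k < n" using xyz x y z by auto
  let ?A = "(i + (if b then (n - j) mod n else j)) mod n"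
  let ?B = "(j + (if c then (n - k) mod n else k)) mod n"
  have A: "int ?A = (int i + (if b then - int j else int j)) mod int n" using ijk fst_mult_int by blast
  have B: "int ?B = (int j + (if c then - int k else int k)) mod int n" using ijk fst_mult_int by blast
  have L: "int ((?A + (if b \<noteq> c then (n - k) mod n else k)) mod n) =
     (int ?A + (if b \<noteq> c then - int k else int k)) mod int n" using ijk fst_mult_int by blast
  have R: "int ((i + (if b then (n - ?B) mod n else ?B)) mod n) =
     (int i + (if b then - int ?B else int ?B)) mod int n"
    using ijk assms fst_mult_int[of ?B n i b] by simp
  have "(int ?A + (if b \<noteq> c then - int k else int k)) mod int n = (int i + (if b then - int ?B else int ?B)) mod int n"
    unfolding A B apply (cases b; cases c) apply (simp_all add: mod_simps) apply (simp_all add: algebra_simps) done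
  then have E: "int ((?A + (if b \<noteq> c then (n - k) mod n else k)) mod n) mod int n = int ((i + (if b then (n - ?B) mod n else ?B)) mod n) mod int n"
    unfolding L R by simp
  have "(?A + (if b \<noteq> c then (n - k) mod n else k)) mod n = (i + (if b then (n - ?B) mod n else ?B)) mod n"
    by (rule nat_eq_modI[OF _ _ E]) (use assms in simp_all)
  then show "x \<otimes>\<^bsub>dihedral_group n\<^esub> y \<otimes>\<^bsub>dihedral_group n\<^esub> z =
        x \<otimes>\<^bsub>dihedral_group n\<^esub> (y \<otimes>\<^bsub>dihedral_group n\<^esub> z)"
    unfolding x y z by auto
next
  fix x assume "x \<in> carrier (dihedral_group n)"
  then obtain i b where x: "x = (i,b)" "i < n" by auto
  show "\<exists>y\<in>carrier (dihedral_group n). y \<otimes>\<^bsub>dihedral_group n\<^esub> x = \<one>\<^bsub>dihedral_group n\<^esub>"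
  proof (cases b)
    case True
    then show ?thesis using x assms by (intro bexI[of _ "(i,True)"]) (auto simp: mod_if)
  next
    case False
    then show ?thesis using x assms by (intro bexI[of _ "((n - i) mod n,False)"]) (auto simp: mod_if)
  qed
next
  fix x assume "x \<in> carrier (dihedral_group n)"
  then obtain i b where x: "x = (i,b)" "i < n" by auto
  then show "\<one>\<^bsub>dihedral_group n\<^esub> \<otimes>\<^bsub>dihedral_group n\<^esub> x = x" by simp
qed


lemma arcs_iff: "(x, y) \<in> cayley_arcs G S \<longleftrightarrow> x \<in> carrier G \<and> (\<exists>s\<in>S. y = s \<otimes>\<^bsub>G\<^esub> x)"
  unfolding cayley_arcs_def by blast

lemma cay_iso_intro:
  assumes bij: "bij_betw F (carrier G) (carrier G)"
    and S: "S \<subseteq> carrier G" and closed: "\<And>x y. x \<in> carrier G \<Longrightarrow> y \<in> carrier G \<Longrightarrow> x \<otimes>\<^bsub>G\<^esub> y \<in> carrier G"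
    and key: "\<And>x. x \<in> carrier G \<Longrightarrow> F ` ((\<lambda>s. s \<otimes>\<^bsub>G\<^esub> x) ` S) = (\<lambda>t. t \<otimes>\<^bsub>G\<^esub> F x) ` T"
  shows "cayley_digraph_iso G S T"
  unfolding cayley_digraph_iso_def
proof (intro exI[of _ F] conjI ballI bij)
  fix x y assume x: "x \<in> carrier G" and y: "y \<in> carrier G"
  have inj: "inj_on F (carrier G)" using bij bij_betw_def by blast
  have Fx: "F x \<in> carrier G" using bij x bij_betwE by blast
  have sub: "(\<lambda>s. s \<otimes>\<^bsub>G\<^esub> x) ` S \<subseteq> carrier G" using S closed x by blast
  have "(x, y) \<in> cayley_arcs G S \<longleftrightarrow> y \<in> (\<lambda>s. s \<otimes>\<^bsub>G\<^esub> x) ` S" using x by (auto simp: arcs_iff)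
  also have "\<dots> \<longleftrightarrow> F y \<in> F ` ((\<lambda>s. s \<otimes>\<^bsub>G\<^esub> x) ` S)"
    using inj sub y by (simp add: inj_on_image_mem_iff)
  also have "\<dots> \<longleftrightarrow> F y \<in> (\<lambda>t. t \<otimes>\<^bsub>G\<^esub> F x) ` T" using key x by simp
  also have "\<dots> \<longleftrightarrow> (F x, F y) \<in> cayley_arcs G T" using Fx by (auto simp: arcs_iff)
  finally show "(x, y) \<in> cayley_arcs G S \<longleftrightarrow> (F x, F y) \<in> cayley_arcs G T" .
qed

lemma not_DCI:
  assumes "S \<subseteq> carrier G" "\<one>\<^bsub>G\<^esub> \<notin> S" "card S = m" "T \<subseteq> carrier G" "\<one>\<^bsub>G\<^esub> \<notin> T"
    "cayley_digraph_iso G S T" "\<And>\<alpha>. \<alpha> \<in> iso G G \<Longrightarrow> \<alpha> ` S \<noteq> T"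
  shows "\<not> has_m_DCI G m"
  using assms unfolding has_m_DCI_def is_CI_digraph_def by blast

lemma iso_D_rot:
  assumes n: "3 \<le> n" and a: "\<alpha> \<in> iso (dihedral_group n) (dihedral_group n)"
  shows "\<exists>v<n. \<forall>i<n. \<alpha> (i, False) = (v * i mod n, False)"
proof -
  let ?D = "dihedral_group n"
  have gD: "group ?D" using group_D n by simp
  have hom: "\<alpha> \<in> hom ?D ?D" and bij: "bij_betw \<alpha> (carrier ?D) (carrier ?D)" using a by (auto simp: iso_def)
  interpret gh: group_hom ?D ?D \<alpha> using gD hom by (simp add: group_hom_def group_hom_axioms_def)
  have inj: "inj_on \<alpha> (carrier ?D)" using bij bij_betw_def by blast
  have a0: "\<alpha> (0, False) = (0, False)" using gh.hom_one by simp
  have hm: "\<alpha> (x \<otimes>\<^bsub>?D\<^esub> y) = \<alpha> x \<otimes>\<^bsub>?D\<^esub> \<alpha> y" if "x \<in> carrier ?D" "y \<in> carrier ?D" for x y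
    by (rule hom_mult[OF hom that])
  obtain v bv where v: "\<alpha> (1, False) = (v, bv)" by (cases "\<alpha> (1, False)")
  have vn: "v < n" using gh.hom_closed[of "(1,False)"] n v by auto
  have "\<not> bv"
  proof
    assume bv: bv
    have "\<alpha> (2, False) = \<alpha> ((1, False) \<otimes>\<^bsub>?D\<^esub> (1, False))" using n by (simp add: numeral_2_eq_2)
    also have "\<dots> = \<alpha> (1, False) \<otimes>\<^bsub>?D\<^esub> \<alpha> (1, False)" by (rule hm) (use n in auto)
    also have "\<dots> = (v, True) \<otimes>\<^bsub>?D\<^esub> (v, True)" using v bv by simp
    also have "\<dots> = (0, False)" using vn by (cases "v = 0") (auto simp: mod_if)
    finally have "\<alpha> (2, False) = \<alpha> (0, False)" using a0 by simp
    then have "(2::nat, False) = (0, False)" using inj n by (auto dest: inj_onD)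
    then show False by simp
  qed
  have "\<alpha> (i, False) = (v * i mod n, False)" if "i < n" for i
    using that
  proof (induction i)
    case 0 then show ?case using a0 by simp
  next
    case (Suc i)
    have "(i, False) \<otimes>\<^bsub>?D\<^esub> (1, False) = (Suc i, False)" using Suc.prems by simp
    then have "\<alpha> (Suc i, False) = \<alpha> (i, False) \<otimes>\<^bsub>?D\<^esub> \<alpha> (1, False)"
      using hm[of "(i,False)" "(1,False)"] Suc.prems n by simp
    also have "\<dots> = ((v * i mod n + v) mod n, False)" using Suc v \<open>\<not> bv\<close> by simp
    also have "\<dots> = (v * Suc i mod n, False)" by (simp add: mod_add_left_eq mod_add_right_eq algebra_simps)
    finally show ?case .
  qed
  then show ?thesis using vn by blast
qed

lemma iso_D_refl:
  assumes n: "3 \<le> n" and a: "\<alpha> \<in> iso (dihedral_group n) (dihedral_group n)" and j: "j < n"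
  shows "snd (\<alpha> (j, True))"
proof (rule ccontr)
  let ?D = "dihedral_group n"
  assume nt: "\<not> snd (\<alpha> (j, True))"
  have hom: "\<alpha> \<in> hom ?D ?D" and bij: "bij_betw \<alpha> (carrier ?D) (carrier ?D)" using a by (auto simp: iso_def)
  have inj: "inj_on \<alpha> (carrier ?D)" using bij bij_betw_def by blast
  have hm: "\<alpha> (x \<otimes>\<^bsub>?D\<^esub> y) = \<alpha> x \<otimes>\<^bsub>?D\<^esub> \<alpha> y" if "x \<in> carrier ?D" "y \<in> carrier ?D" for x y
    by (rule hom_mult[OF hom that])
  obtain v where v: "v < n" "\<forall>i<n. \<alpha> (i, False) = (v * i mod n, False)" using iso_D_rot[OF n a] by blast
  obtain w where w: "\<alpha> (j, True) = (w, False)" using nt by (cases "\<alpha> (j, True)") auto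
  have "\<alpha> ((j, True) \<otimes>\<^bsub>?D\<^esub> (1, False)) = \<alpha> ((1, False) \<otimes>\<^bsub>?D\<^esub> (j, True))"
    using hm[of "(j,True)" "(1,False)"] hm[of "(1,False)" "(j,True)"] j n w v
    by (simp add: add.commute)
  then have eq: "(j, True) \<otimes>\<^bsub>?D\<^esub> (1, False) = (1, False) \<otimes>\<^bsub>?D\<^esub> (j, True)"
    using inj j n by (auto dest!: inj_onD)
  have "int ((j + (n - 1) mod n) mod n) = (int j - 1) mod int n"
    using fst_mult_int[of 1 n j True] n by simp
  moreover have "int ((1 + j) mod n) = (int j + 1) mod int n" by (simp add: of_nat_mod add.commute)
  ultimately have "(int j - 1) mod int n = (int j + 1) mod int n" using eq by simp
  then have "int n dvd (int j - 1) - (int j + 1)" by (simp add: mod_eq_dvd_iff)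
  then have "int n dvd - 2" by simp
  then have "int n dvd 2" by simp
  then show False using n by (auto dest: zdvd_imp_le)
qed

lemma even_mod_even: "even (n::nat) \<Longrightarrow> even (a mod n) = even a"
  by (simp add: dvd_mod_iff)

lemma mod_n_cancel: "(a + int n - b) mod int n = (a - b) mod int n"
  by (simp add: mod_eq_dvd_iff)

lemma int_sub_mod_Suc: "j \<le> Suc n \<Longrightarrow> int ((Suc n - j) mod n) = (1 - int j) mod int n"
  using int_sub_mod[of j n 1] by simp
lemma int_sub_mod_Suc2: "j \<le> Suc (Suc n) \<Longrightarrow> int ((Suc (Suc n) - j) mod n) = (2 - int j) mod int n"
  using int_sub_mod[of j n 2] by (simp add: numeral_2_eq_2)

definition sig2 :: "nat \<Rightarrow> nat \<times> bool \<Rightarrow> nat \<times> bool" where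
  "sig2 n = (\<lambda>(i,b). (if b then (n + 2 - i) mod n else (n - i) mod n, b))"
definition tau2 :: "nat \<Rightarrow> nat \<times> bool \<Rightarrow> nat \<times> bool" where
  "tau2 n = (\<lambda>(i,b). ((if b then n + 1 - i else i) mod n, False))"
definition F2 :: "nat \<Rightarrow> nat \<times> bool \<Rightarrow> nat \<times> bool" where
  "F2 n = (\<lambda>(i,b). ((if b = even i then n + 1 - i else i) mod n, odd i))"

lemma core2:
  assumes n: "even n" "2 \<le> n" and c: "c < n" "even c" and i: "i < n"
  shows "F2 n ((c,bs) \<otimes>\<^bsub>dihedral_group n\<^esub> (i,bx)) =
    tau2 n (if bx = even i then sig2 n (c,bs) else (c,bs)) \<otimes>\<^bsub>dihedral_group n\<^esub> F2 n (i,bx)"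
proof -
  define y where "y = (c + (if bs then (n - i) mod n else i)) mod n"
  have yn: "y < n" using n by (simp add: y_def)
  have yint: "int y = (int c + (if bs then - int i else int i)) mod int n"
    unfolding y_def by (rule fst_mult_int[OF i])
  have ye: "even y = even i"
  proof -
    have "even y = even (c + (if bs then (n - i) mod n else i))" unfolding y_def using n even_mod_even by blast
    also have "\<dots> = even i" using c n i by (cases bs) (auto simp: even_mod_even)
    finally show ?thesis .
  qed
  have L: "F2 n ((c,bs) \<otimes>\<^bsub>dihedral_group n\<^esub> (i,bx)) =
     ((if (bs \<noteq> bx) = even i then n + 1 - y else y) mod n, odd i)"
    using ye by (simp add: F2_def y_def[symmetric])
  have tfs: "\<And>z. tau2 n z = (fst (tau2 n z), False)" by (auto simp: tau2_def split: prod.splits)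
  define u where "u = fst (tau2 n (if bx = even i then sig2 n (c,bs) else (c,bs)))"
  have u: "tau2 n (if bx = even i then sig2 n (c,bs) else (c,bs)) = (u, False)"
    unfolding u_def by (rule tfs)
  have R: "tau2 n (if bx = even i then sig2 n (c,bs) else (c,bs)) \<otimes>\<^bsub>dihedral_group n\<^esub> F2 n (i,bx) =
     ((u + (if bx = even i then n + 1 - i else i) mod n) mod n, odd i)"
    unfolding u by (simp add: F2_def)
  have uint: "int u mod int n = (if bx = even i then (if bs then int c - 1 else - int c) else (if bs then 1 - int c else int c)) mod int n"
  proof -
    have "u = fst (tau2 n (if bx = even i then sig2 n (c,bs) else (c,bs)))" using u by simp
    also have "\<dots> = (if bx = even i then (if bs then (n + 1 - (n + 2 - c) mod n) mod n else (n - c) mod n mod n)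
        else (if bs then (n + 1 - c) mod n else c mod n))"
      by (simp add: tau2_def sig2_def)
    finally have u': "u = \<dots>" .
    have "(n + 2 - c) mod n < n" using n by simp
    then have m1: "(n + 2 - c) mod n \<le> n + 1" by simp
    show ?thesis unfolding u' using c n m1
      by (auto simp: int_sub_mod int_sub_mod0 of_nat_mod mod_simps) (auto simp: mod_eq_dvd_iff)
  qed
  have "int ((if (bs \<noteq> bx) = even i then n + 1 - y else y) mod n) mod int n =
        int ((u + (if bx = even i then n + 1 - i else i) mod n) mod n) mod int n"
  proof -
    have A: "int ((if (bs \<noteq> bx) = even i then n + 1 - y else y) mod n) =
      (if (bs \<noteq> bx) = even i then 1 - int y else int y) mod int n"
      using yn by (auto simp: of_nat_mod) (auto simp: mod_eq_dvd_iff)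
    have B: "int ((u + (if bx = even i then n + 1 - i else i) mod n) mod n) =
      (int u mod int n + (if bx = even i then 1 - int i else int i)) mod int n"
      using i by (auto simp: of_nat_mod mod_simps) (auto simp: mod_eq_dvd_iff)
    show ?thesis unfolding A B uint yint
      apply (cases bs; cases bx; cases "even i")
      apply (simp_all add: mod_simps)
      apply (simp_all add: mod_eq_dvd_iff)
      done
  qed
  then have "(if (bs \<noteq> bx) = even i then n + 1 - y else y) mod n = (u + (if bx = even i then n + 1 - i else i) mod n) mod n"
    using n by (intro nat_eq_modI[of _ n]) auto
  then show ?thesis unfolding L R by simp
qed


lemma two_elems: assumes "finite A" "2 \<le> card A" shows "\<exists>a b. a \<in> A \<and> b \<in> A \<and> a \<noteq> b"
proof (rule ccontr)
  assume "\<not> ?thesis"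
  then have "card A \<le> Suc 0" using assms(1) card_le_Suc0_iff_eq by blast
  then show False using assms(2) by simp
qed

lemma invol_even:
  assumes fin: "finite X" and inv: "\<forall>x\<in>X. \<sigma> x \<in> X \<and> \<sigma> (\<sigma> x) = x"
  shows "2 * t \<le> card X \<Longrightarrow> \<exists>Y\<subseteq>X. (\<forall>y\<in>Y. \<sigma> y \<in> Y) \<and> card Y = 2 * t"
proof (induction t)
  case 0 show ?case by (intro exI[of _ "{}"]) auto
next
  case (Suc t)
  from Suc.IH obtain Y where Y: "Y \<subseteq> X" "\<forall>y\<in>Y. \<sigma> y \<in> Y" "card Y = 2*t" using Suc.prems by auto
  have fY: "finite Y" using Y fin finite_subset by blast
  have cXY: "card (X - Y) = card X - 2 * t" using Y fin card_Diff_subset[OF fY Y(1)] by simp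
  then have "2 \<le> card (X - Y)" using Suc.prems by simp
  then obtain a b where ab: "a \<in> X - Y" "b \<in> X - Y" "a \<noteq> b" using two_elems fin by (meson finite_Diff)
  have notin: "\<sigma> z \<notin> Y" if "z \<in> X - Y" for z
  proof
    assume "\<sigma> z \<in> Y" then have "\<sigma> (\<sigma> z) \<in> Y" using Y by blast
    then show False using that inv by auto
  qed
  show ?case
  proof (cases "\<exists>z\<in>X - Y. \<sigma> z \<noteq> z")
    case True
    then obtain z where z: "z \<in> X - Y" "\<sigma> z \<noteq> z" by blast
    let ?Y = "insert z (insert (\<sigma> z) Y)"
    have "card ?Y = 2 * Suc t" using z notin[OF z(1)] fY Y by simp
    moreover have "?Y \<subseteq> X" using z Y inv by auto
    moreover have "\<forall>y\<in>?Y. \<sigma> y \<in> ?Y" using z Y inv by auto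
    ultimately show ?thesis by blast
  next
    case False
    let ?Y = "insert a (insert b Y)"
    have "card ?Y = 2 * Suc t" using ab fY Y by simp
    moreover have "?Y \<subseteq> X" using ab Y by auto
    moreover have "\<forall>y\<in>?Y. \<sigma> y \<in> ?Y" using ab Y False by auto
    ultimately show ?thesis by blast
  qed
qed

lemma invol_subset:
  assumes fin: "finite X" and inv: "\<forall>x\<in>X. \<sigma> x \<in> X \<and> \<sigma> (\<sigma> x) = x"
    and x0: "x0 \<in> X" "\<sigma> x0 = x0" and j: "j \<le> card X"
  shows "\<exists>Y\<subseteq>X. (\<forall>y\<in>Y. \<sigma> y \<in> Y) \<and> card Y = j"
proof (cases "j = card X")
  case True then show ?thesis using inv by blast
next
  case False
  let ?X = "X - {x0}"
  have cX: "card ?X = card X - 1" using x0 fin by simp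
  have jX: "j \<le> card ?X" using False j cX by simp
  have inv': "\<forall>x\<in>?X. \<sigma> x \<in> ?X \<and> \<sigma> (\<sigma> x) = x"
  proof
    fix x assume x: "x \<in> ?X"
    then have a: "\<sigma> x \<in> X" "\<sigma> (\<sigma> x) = x" using inv by auto
    have "\<sigma> x \<noteq> x0"
    proof
      assume "\<sigma> x = x0" then have "\<sigma> (\<sigma> x) = x0" using x0 by simp
      then show False using a x by simp
    qed
    then show "\<sigma> x \<in> ?X \<and> \<sigma> (\<sigma> x) = x" using a by simp
  qed
  show ?thesis
  proof (cases "even j")
    case True
    then obtain t where t: "j = 2 * t" by blast
    obtain Y where "Y \<subseteq> ?X" "\<forall>y\<in>Y. \<sigma> y \<in> Y" "card Y = j"
      using invol_even[OF _ inv', of t] fin jX t by auto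
    then show ?thesis by blast
  next
    case False
    then obtain t where t: "j = 2 * t + 1" by (metis oddE)
    obtain Y where Y: "Y \<subseteq> ?X" "\<forall>y\<in>Y. \<sigma> y \<in> Y" "card Y = 2 * t"
      using invol_even[OF _ inv', of t] fin jX t by auto
    have "finite Y" using Y fin finite_subset by blast
    moreover have "x0 \<notin> Y" using Y by auto
    ultimately have "card (insert x0 Y) = j" using Y t by simp
    moreover have "insert x0 Y \<subseteq> X" using Y x0 by auto
    moreover have "\<forall>y\<in>insert x0 Y. \<sigma> y \<in> insert x0 Y" using Y x0 by auto
    ultimately show ?thesis by blast
  qed
qed

lemma bij_invol: "(\<And>x. x \<in> A \<Longrightarrow> f x \<in> A) \<Longrightarrow> (\<And>x. x \<in> A \<Longrightarrow> f (f x) = x) \<Longrightarrow> bij_betw f A A"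
  by (rule bij_betw_byWitness[where f'=f]) auto

lemma sig2_invol:
  assumes "i < n" "0 < n" shows "sig2 n (sig2 n (i,b)) = (i,b)"
proof (cases b)
  case True
  have e: "int ((n + 2 - (n + 2 - i) mod n) mod n) mod int n = int i mod int n"
  proof -
    have "(n + 2 - i) mod n < n" using assms by simp
    then have "int ((n + 2 - (n + 2 - i) mod n) mod n) = (2 - int ((n + 2 - i) mod n)) mod int n"
      using int_sub_mod[of "(n + 2 - i) mod n" n 2] by simp
    also have "\<dots> = (2 - (2 - int i) mod int n) mod int n" using assms by (subst int_sub_mod) auto
    also have "\<dots> = int i mod int n" by (simp add: mod_simps)
    finally show ?thesis by simp
  qed
  have "(n + 2 - (n + 2 - i) mod n) mod n = i" using nat_eq_modI[OF _ _ e] assms by simp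
  then show ?thesis using True by (simp add: sig2_def)
next
  case False
  then show ?thesis using assms by (cases "i = 0") (auto simp: sig2_def mod_if)
qed

lemma F2_invol:
  assumes "i < n" "even n" "2 \<le> n" shows "F2 n (F2 n (i,b)) = (i,b)"
proof (cases "b = even i")
  case True
  define i' where "i' = (n + 1 - i) mod n"
  have i'n: "i' < n" using assms by (simp add: i'_def)
  have ei': "even i' = odd i"
  proof -
    have "even i' = even (n + 1 - i)" unfolding i'_def using assms even_mod_even by blast
    also have "\<dots> = odd i" using assms by (simp add: even_diff_nat)
    finally show ?thesis .
  qed
  have F1: "F2 n (i,b) = (i', odd i)" using True by (simp add: F2_def i'_def)
  have e: "int ((n + 1 - i') mod n) mod int n = int i mod int n"
  proof -
    have "int ((n + 1 - i') mod n) = (1 - int i') mod int n" using i'n int_sub_mod[of i' n 1] by simp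
    also have "\<dots> = (1 - (1 - int i) mod int n) mod int n"
    proof -
      have h: "int ((n + 1 - i) mod n) = (1 - int i) mod int n" using int_sub_mod[of i n 1] assms by simp
      show ?thesis unfolding i'_def h ..
    qed
    also have "\<dots> = int i mod int n" by (simp add: mod_simps)
    finally show ?thesis by simp
  qed
  have "(n + 1 - i') mod n = i" using nat_eq_modI[OF _ _ e] assms by simp
  then show ?thesis using F1 ei' True by (simp add: F2_def)
next
  case False
  then show ?thesis using assms by (auto simp: F2_def)
qed

lemma card_evens: "card {i. i < n \<and> even (i::nat)} = (n + 1) div 2"
proof -
  have "{i. i < n \<and> even (i::nat)} = (\<lambda>k. 2 * k) ` {..<(n + 1) div 2}"
  proof (rule Set.set_eqI)
    fix i :: nat
    show "i \<in> {i. i < n \<and> even i} \<longleftrightarrow> i \<in> (\<lambda>k. 2 * k) ` {..<(n + 1) div 2}"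
    proof
      assume "i \<in> {i. i < n \<and> even i}"
      then have "i = 2 * (i div 2)" "i div 2 \<in> {..<(n + 1) div 2}" by auto
      then show "i \<in> (\<lambda>k. 2 * k) ` {..<(n + 1) div 2}" by (rule image_eqI)
    next
      assume "i \<in> (\<lambda>k. 2 * k) ` {..<(n + 1) div 2}"
      then show "i \<in> {i. i < n \<and> even i}" by auto
    qed
  qed
  moreover have "inj_on (\<lambda>k::nat. 2 * k) {..<(n + 1) div 2}" by (auto simp: inj_on_def)
  ultimately show ?thesis by (simp add: card_image)
qed

lemma p2_not_DCI:
  assumes n: "4 \<le> n" "even n" and m: "3 \<le> m" "m \<le> n - 1"
  shows "\<not> has_m_DCI (dihedral_group n) m"
proof -
  let ?D = "dihedral_group n"
  let ?\<sigma> = "sig2 n"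
  define X where "X = ({i. i < n \<and> even i} \<times> (UNIV::bool set)) - {(0, False)}"
  define Ob where "Ob = {(0::nat, True), (2, True)}"
  have X_iff: "(i, b) \<in> X \<longleftrightarrow> i < n \<and> even i \<and> (i, b) \<noteq> (0, False)" for i b
    by (auto simp: X_def)
  have finX: "finite X" unfolding X_def by auto
  have cardX: "card X = n - 1"
  proof -
    have "card ({i. i < n \<and> even i} \<times> (UNIV::bool set)) = n"
      using n by (simp add: card_cartesian_product card_evens)
    then show ?thesis unfolding X_def using n by (subst card_Diff_singleton) auto
  qed
  have OX: "Ob \<subseteq> X" using n by (auto simp: Ob_def X_iff)
  have cardO: "card Ob = 2" by (simp add: Ob_def)
  have sX: "?\<sigma> x \<in> X" if "x \<in> X" for x
  proof -
    obtain i b where x: "x = (i, b)" by (cases x)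
    have i: "i < n" "even i" "(i, b) \<noteq> (0, False)" using that x X_iff by auto
    show ?thesis
    proof (cases b)
      case True
      have "even ((n + 2 - i) mod n)" using n i by (simp add: even_mod_even)
      then show ?thesis using True x n by (simp add: sig2_def X_iff)
    next
      case False
      then have "i \<noteq> 0" using i by auto
      then show ?thesis using False x n i by (simp add: sig2_def X_iff)
    qed
  qed
  have ssX: "?\<sigma> (?\<sigma> x) = x" if "x \<in> X" for x
    using that sig2_invol[of "fst x" n "snd x"] n by (cases x) (auto simp: X_iff)
  have h2: "Suc (Suc n) mod n = 2"
  proof -
    have "Suc (Suc n) mod n = (n + 2) mod n" by simp
    also have "\<dots> = 2 mod n" by (simp only: mod_add_self1)
    also have "\<dots> = 2" using n by simp
    finally show ?thesis .
  qed
  have sO: "?\<sigma> x \<in> Ob" if "x \<in> Ob" for x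
    using that n h2 by (auto simp: Ob_def sig2_def)
  define X' where "X' = X - Ob"
  have invX': "\<forall>x\<in>X'. ?\<sigma> x \<in> X' \<and> ?\<sigma> (?\<sigma> x) = x"
  proof
    fix x assume x: "x \<in> X'"
    have "?\<sigma> x \<notin> Ob"
    proof
      assume "?\<sigma> x \<in> Ob" then have "?\<sigma> (?\<sigma> x) \<in> Ob" by (rule sO)
      then show False using x ssX by (auto simp: X'_def)
    qed
    then show "?\<sigma> x \<in> X' \<and> ?\<sigma> (?\<sigma> x) = x" using x sX ssX by (auto simp: X'_def)
  qed
  have cardX': "card X' = n - 3" unfolding X'_def using OX cardO cardX finX
    by (subst card_Diff_subset) (auto intro: finite_subset)
  obtain x0 where x0: "x0 \<in> X'" "?\<sigma> x0 = x0"
  proof (cases "4 dvd n")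
    case True
    then obtain k where k: "n = 4 * k" by blast
    have "(2 * k, False) \<in> X'" using k n by (auto simp: X'_def X_iff Ob_def)
    moreover have "?\<sigma> (2 * k, False) = (2 * k, False)" using k n by (simp add: sig2_def)
    ultimately show ?thesis using that by blast
  next
    case False
    have "n = 4 * (n div 4) + 2" using False n by presburger
    then obtain k where k: "n = 4 * k + 2" by blast
    have "(2 * k + 2, True) \<in> X'" using k n by (auto simp: X'_def X_iff Ob_def)
    moreover have "?\<sigma> (2 * k + 2, True) = (2 * k + 2, True)" using k n by (simp add: sig2_def)
    ultimately show ?thesis using that by blast
  qed
  obtain Y' where Y': "Y' \<subseteq> X'" "\<forall>y\<in>Y'. ?\<sigma> y \<in> Y'" "card Y' = m - 2"
  proof -
    have fX': "finite X'" using finX by (simp add: X'_def)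
    have "m - 2 \<le> card X'" using m cardX' by simp
    from invol_subset[OF fX' invX' x0(1) x0(2) this] show ?thesis using that by blast
  qed
  define Y where "Y = Y' \<union> Ob"
  have YX: "Y \<subseteq> X" using Y' OX by (auto simp: Y_def X'_def)
  have cardY: "card Y = m"
  proof -
    have "finite Y'" using Y' finX by (auto simp: X'_def intro: finite_subset)
    moreover have "Y' \<inter> Ob = {}" using Y' by (auto simp: X'_def)
    ultimately have "card Y = card Y' + card Ob" unfolding Y_def by (simp add: card_Un_disjoint Ob_def)
    then show ?thesis using Y' cardO m by simp
  qed
  have invY: "?\<sigma> y \<in> Y" if "y \<in> Y" for y using that Y'(2) sO[of y] unfolding Y_def by blast
  have ssY: "?\<sigma> (?\<sigma> y) = y" if "y \<in> Y" for y using YX ssX[of y] that by blast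
  define T where "T = tau2 n ` Y"
  have Ycar: "Y \<subseteq> carrier ?D" using YX by (auto simp: X_def)
  have Y1: "\<one>\<^bsub>?D\<^esub> \<notin> Y" using YX by (auto simp: X_def)
  have Tcar: "T \<subseteq> carrier ?D" using n by (auto simp: T_def tau2_def)
  have T1: "\<one>\<^bsub>?D\<^esub> \<notin> T"
  proof
    assume "\<one>\<^bsub>?D\<^esub> \<in> T"
    then obtain i b where ib: "(i, b) \<in> Y" "tau2 n (i, b) = (0, False)" by (auto simp: T_def)
    have i: "i < n" "even i" "(i, b) \<noteq> (0, False)" using ib YX X_iff by auto
    show False
    proof (cases b)
      case True
      have "odd ((n + 1 - i) mod n)" using n i by (simp add: even_mod_even)
      then show False using ib True by (simp add: tau2_def)
    next
      case False
      then show False using ib i by (simp add: tau2_def)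
    qed
  qed
  have Fbij: "bij_betw (F2 n) (carrier ?D) (carrier ?D)"
  proof (rule bij_invol)
    fix x assume "x \<in> carrier ?D"
    then show "F2 n x \<in> carrier ?D" using n by (cases x) (simp add: F2_def)
  next
    fix x assume "x \<in> carrier ?D"
    then show "F2 n (F2 n x) = x" using n F2_invol[of "fst x" n "snd x"] by (cases x) simp
  qed
  have key: "F2 n ` ((\<lambda>s. s \<otimes>\<^bsub>?D\<^esub> x) ` Y) = (\<lambda>t. t \<otimes>\<^bsub>?D\<^esub> F2 n x) ` T"
    if x: "x \<in> carrier ?D" for x
  proof -
    obtain i bx where xi: "x = (i, bx)" "i < n" using x by (cases x) auto
    let ?s' = "\<lambda>s. if bx = even i then ?\<sigma> s else s"
    have core: "F2 n (s \<otimes>\<^bsub>?D\<^esub> x) = tau2 n (?s' s) \<otimes>\<^bsub>?D\<^esub> F2 n x" if "s \<in> Y" for s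
    proof -
      obtain c bs where s: "s = (c, bs)" by (cases s)
      have "c < n" "even c" using that s YX X_iff by auto
      then show ?thesis using core2[of n c i bs bx] n xi s by simp
    qed
    have s'Y: "?s' s \<in> Y" if "s \<in> Y" for s using that invY by simp
    have s's': "?s' (?s' s) = s" if "s \<in> Y" for s using that ssY by simp
    show ?thesis
    proof (intro Set.set_eqI iffI)
      fix z assume "z \<in> F2 n ` ((\<lambda>s. s \<otimes>\<^bsub>?D\<^esub> x) ` Y)"
      then obtain s where s: "s \<in> Y" "z = F2 n (s \<otimes>\<^bsub>?D\<^esub> x)" by auto
      then show "z \<in> (\<lambda>t. t \<otimes>\<^bsub>?D\<^esub> F2 n x) ` T" using core s'Y unfolding T_def by blast
    next
      fix z assume "z \<in> (\<lambda>t. t \<otimes>\<^bsub>?D\<^esub> F2 n x) ` T"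
      then obtain y where y: "y \<in> Y" "z = tau2 n y \<otimes>\<^bsub>?D\<^esub> F2 n x" by (auto simp: T_def)
      have "z = F2 n (?s' y \<otimes>\<^bsub>?D\<^esub> x)" using core[OF s'Y[OF y(1)]] s's'[OF y(1)] y by simp
      then show "z \<in> F2 n ` ((\<lambda>s. s \<otimes>\<^bsub>?D\<^esub> x) ` Y)" using s'Y[OF y(1)] by blast
    qed
  qed
  have iso: "cayley_digraph_iso ?D Y T"
  proof (rule cay_iso_intro[OF Fbij Ycar])
    fix x y assume "x \<in> carrier ?D" "y \<in> carrier ?D"
    then show "x \<otimes>\<^bsub>?D\<^esub> y \<in> carrier ?D" using n by (cases x; cases y) auto
  next
    fix x assume "x \<in> carrier ?D" then show "F2 n ` ((\<lambda>s. s \<otimes>\<^bsub>?D\<^esub> x) ` Y) = (\<lambda>t. t \<otimes>\<^bsub>?D\<^esub> F2 n x) ` T"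
      by (rule key)
  qed
  have noiso: "\<alpha> ` Y \<noteq> T" if a: "\<alpha> \<in> iso ?D ?D" for \<alpha>
  proof
    assume eq: "\<alpha> ` Y = T"
    have "(0, True) \<in> Y" by (simp add: Y_def Ob_def)
    then have "\<alpha> (0, True) \<in> T" using eq by blast
    then have "\<not> snd (\<alpha> (0, True))" by (auto simp: T_def tau2_def split: prod.splits)
    moreover have "snd (\<alpha> (0, True))" using iso_D_refl[OF _ a, of 0] n by simp
    ultimately show False by simp
  qed
  show ?thesis by (rule not_DCI[OF Ycar Y1 cardY Tcar T1 iso noiso])
qed

definition phi :: "nat \<Rightarrow> nat \<Rightarrow> nat \<Rightarrow> nat" where
  "phi n d i = nat ((2 * (int i mod int d) - int i) mod int n)"
definition psi :: "nat \<Rightarrow> nat \<Rightarrow> nat \<Rightarrow> nat" where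
  "psi n d i = nat ((- 2 * ((- int i) mod int d) - int i) mod int n)"
definition F3 :: "nat \<Rightarrow> nat \<Rightarrow> nat \<times> bool \<Rightarrow> nat \<times> bool" where
  "F3 n d = (\<lambda>(i,b). (if b then psi n d i else phi n d i, b))"

lemma phi_int: "0 < n \<Longrightarrow> int (phi n d i) = (2 * (int i mod int d) - int i) mod int n"
  by (simp add: phi_def)
lemma psi_int: "0 < n \<Longrightarrow> int (psi n d i) = (- 2 * ((- int i) mod int d) - int i) mod int n"
  by (simp add: psi_def)
lemma phi_lt: "0 < n \<Longrightarrow> phi n d i < n"
  unfolding phi_def by (simp add: nat_less_iff)
lemma psi_lt: "0 < n \<Longrightarrow> psi n d i < n"
  unfolding psi_def by (simp add: nat_less_iff)

lemma phi_modd: assumes "0 < n" "d dvd n" shows "int (phi n d i) mod int d = int i mod int d"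
proof -
  have "int (phi n d i) mod int d = (2 * (int i mod int d) - int i) mod int d"
    using assms by (simp add: phi_int mod_mod_cancel)
  also have "\<dots> = int i mod int d"
    by (simp add: mod_eq_dvd_iff) (simp add: minus_div_mult_eq_mod[symmetric] algebra_simps)
  finally show ?thesis .
qed

lemma psi_modd: assumes "0 < n" "d dvd n" shows "int (psi n d i) mod int d = int i mod int d"
proof -
  have "int (psi n d i) mod int d = (- 2 * ((- int i) mod int d) - int i) mod int d"
    using assms by (simp add: psi_int mod_mod_cancel)
  also have "\<dots> = int i mod int d"
    by (simp add: mod_eq_dvd_iff) (simp add: minus_div_mult_eq_mod[symmetric] algebra_simps)
  finally show ?thesis .
qed

lemma psi_modd': assumes "0 < n" "d dvd n" shows "(- int (psi n d i)) mod int d = (- int i) mod int d"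
  using psi_modd[OF assms, of i] by (metis mod_minus_eq)

lemma phi_invol: assumes "0 < n" "d dvd n" "i < n" shows "phi n d (phi n d i) = i"
proof -
  have "int (phi n d (phi n d i)) = (2 * (int (phi n d i) mod int d) - int (phi n d i)) mod int n"
    using phi_int[OF assms(1), of d "phi n d i"] .
  also have "\<dots> = (2 * (int i mod int d) - int (phi n d i)) mod int n" using phi_modd[OF assms(1,2), of i] by simp
  also have "\<dots> = (2 * (int i mod int d) - (2 * (int i mod int d) - int i) mod int n) mod int n"
    using phi_int[OF assms(1), of d i] by simp
  also have "\<dots> = int i mod int n"
    by (simp add: mod_eq_dvd_iff) (simp add: minus_div_mult_eq_mod[symmetric] algebra_simps)
  also have "\<dots> = int i" using assms by simp
  finally show ?thesis by simp
qed

lemma psi_invol: assumes "0 < n" "d dvd n" "i < n" shows "psi n d (psi n d i) = i"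
proof -
  have "int (psi n d (psi n d i)) = (- 2 * ((- int (psi n d i)) mod int d) - int (psi n d i)) mod int n"
    using psi_int[OF assms(1), of d "psi n d i"] .
  also have "\<dots> = (- 2 * ((- int i) mod int d) - int (psi n d i)) mod int n" using psi_modd'[OF assms(1,2), of i] by simp
  also have "\<dots> = (- 2 * ((- int i) mod int d) - (- 2 * ((- int i) mod int d) - int i) mod int n) mod int n"
    using psi_int[OF assms(1), of d i] by simp
  also have "\<dots> = int i mod int n"
    by (simp add: mod_eq_dvd_iff) (simp add: minus_div_mult_eq_mod[symmetric] algebra_simps)
  also have "\<dots> = int i" using assms by simp
  finally show ?thesis by simp
qed

lemma F3_invol: assumes "0 < n" "d dvd n" "x \<in> carrier (dihedral_group n)" shows "F3 n d (F3 n d x) = x"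
  using assms phi_invol psi_invol phi_lt psi_lt by (cases x) (auto simp: F3_def)

lemma F3_carrier: assumes "0 < n" "x \<in> carrier (dihedral_group n)" shows "F3 n d x \<in> carrier (dihedral_group n)"
  using assms phi_lt psi_lt by (cases x) (auto simp: F3_def)

lemma F3_lab: assumes "0 < n" "d dvd n" shows "int (fst (F3 n d x)) mod int d = int (fst x) mod int d" "snd (F3 n d x) = snd x"
  using assms phi_modd psi_modd by (cases x; auto simp: F3_def)+


lemma neg_modn_modd: "(d::int) dvd n \<Longrightarrow> (- (a mod n)) mod d = (- a) mod d"
  by (metis mod_minus_eq mod_mod_cancel)

lemma lab_mult:
  assumes "0 < n" "d dvd n" "i < n"
  shows "int (fst ((j, b0) \<otimes>\<^bsub>dihedral_group n\<^esub> (i, bx))) mod int d = (int j + (if b0 then - int i else int i)) mod int d"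
proof -
  have "int (fst ((j, b0) \<otimes>\<^bsub>dihedral_group n\<^esub> (i, bx))) = (int j + (if b0 then - int i else int i)) mod int n"
    using fst_mult_int[OF assms(3), of j b0] by simp
  then show ?thesis using assms by (simp add: mod_mod_cancel)
qed

lemma lemM:
  assumes n: "0 < n" "d dvd n" and i: "i < n" "i' < n" and k: "k' < n"
    and ii: "int i' mod int d = int i mod int d"
    and kk: "int k' mod int d = (int j + (if b0 then - int i else int i)) mod int d"
  shows "\<exists>j'<n. int j' mod int d = int j mod int d \<and> (j', b0) \<otimes>\<^bsub>dihedral_group n\<^esub> (i', bx) = (k', b0 \<noteq> bx)"
proof -
  define j' where "j' = nat ((int k' - (if b0 then - int i' else int i')) mod int n)"
  have j'int: "int j' = (int k' - (if b0 then - int i' else int i')) mod int n" using n by (simp add: j'_def)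
  have j'n: "j' < n" using n j'int by (simp add: j'_def nat_less_iff)
  have h1: "int d dvd int k' - (int j + (if b0 then - int i else int i))" using kk by (simp add: mod_eq_dvd_iff)
  have h2: "int d dvd int i' - int i" using ii by (simp add: mod_eq_dvd_iff)
  have "int j' mod int d = (int k' - (if b0 then - int i' else int i')) mod int d"
    using n by (simp add: j'int mod_mod_cancel)
  also have "\<dots> = int j mod int d"
  proof (cases b0)
    case True
    have "int d dvd (int k' - (int j + - int i)) + (int i' - int i)" using dvd_add[OF h1 h2] True by simp
    then show ?thesis using True by (simp add: mod_eq_dvd_iff algebra_simps)
  next
    case False
    have "int d dvd (int k' - (int j + int i)) - (int i' - int i)" using dvd_diff[OF h1 h2] False by simp
    then show ?thesis using False by (simp add: mod_eq_dvd_iff algebra_simps)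
  qed
  finally have lab: "int j' mod int d = int j mod int d" .
  have "int (fst ((j', b0) \<otimes>\<^bsub>dihedral_group n\<^esub> (i', bx))) = (int j' + (if b0 then - int i' else int i')) mod int n"
    using fst_mult_int[OF i(2), of j' b0] by simp
  also have "\<dots> = int k' mod int n" unfolding j'int by (simp add: mod_simps)
  finally have "int (fst ((j', b0) \<otimes>\<^bsub>dihedral_group n\<^esub> (i', bx))) mod int n = int k' mod int n" by simp
  then have "fst ((j', b0) \<otimes>\<^bsub>dihedral_group n\<^esub> (i', bx)) = k'"
    using n k by (intro nat_eq_modI[of _ n]) auto
  then have "(j', b0) \<otimes>\<^bsub>dihedral_group n\<^esub> (i', bx) = (k', b0 \<noteq> bx)" by simp
  then show ?thesis using j'n lab by blast
qed

lemma sat_key: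
  assumes n: "0 < n" "d dvd n" and x: "x \<in> carrier (dihedral_group n)"
    and W: "W = {(j, b0) | j. j < n \<and> int j mod int d \<in> P}"
  shows "F3 n d ` ((\<lambda>s. s \<otimes>\<^bsub>dihedral_group n\<^esub> x) ` W) = (\<lambda>t. t \<otimes>\<^bsub>dihedral_group n\<^esub> F3 n d x) ` W"
proof -
  let ?D = "dihedral_group n"
  obtain i bx where xi: "x = (i, bx)" "i < n" using x by (cases x) auto
  obtain i' where Fx: "F3 n d x = (i', bx)" "i' < n" "int i' mod int d = int i mod int d"
    using F3_carrier[OF n(1) x, of d] F3_lab[OF n, of x] xi by (cases "F3 n d x") auto
  show ?thesis
  proof (intro Set.set_eqI iffI)
    fix z assume "z \<in> F3 n d ` ((\<lambda>s. s \<otimes>\<^bsub>?D\<^esub> x) ` W)"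
    then obtain j where j: "(j, b0) \<in> W" "z = F3 n d ((j, b0) \<otimes>\<^bsub>?D\<^esub> x)" using W by auto
    have jn: "j < n" "int j mod int d \<in> P" using j W by auto
    obtain k where k: "(j, b0) \<otimes>\<^bsub>?D\<^esub> x = (k, b0 \<noteq> bx)" "k < n"
      using n xi by simp
    have klab: "int k mod int d = (int j + (if b0 then - int i else int i)) mod int d"
      using lab_mult[OF n xi(2), of j b0 bx] k xi by simp
    obtain k' where k': "z = (k', b0 \<noteq> bx)" "k' < n" "int k' mod int d = int k mod int d"
      using F3_carrier[OF n(1), of "(k, b0 \<noteq> bx)" d] F3_lab[OF n, of "(k, b0 \<noteq> bx)"] j(2) k
      by (cases "F3 n d (k, b0 \<noteq> bx)") auto
    obtain j' where j': "j' < n" "int j' mod int d = int j mod int d" "(j', b0) \<otimes>\<^bsub>?D\<^esub> (i', bx) = (k', b0 \<noteq> bx)"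
      using lemM[OF n xi(2) Fx(2) k'(2) Fx(3), of j b0 bx] k'(3) klab by auto
    have "(j', b0) \<in> W" using W j' jn by auto
    then show "z \<in> (\<lambda>t. t \<otimes>\<^bsub>?D\<^esub> F3 n d x) ` W" using j'(3) k'(1) Fx(1) by force
  next
    fix z assume "z \<in> (\<lambda>t. t \<otimes>\<^bsub>?D\<^esub> F3 n d x) ` W"
    then obtain j where j: "(j, b0) \<in> W" "z = (j, b0) \<otimes>\<^bsub>?D\<^esub> F3 n d x" using W by auto
    have jn: "j < n" "int j mod int d \<in> P" using j W by auto
    obtain k where k: "z = (k, b0 \<noteq> bx)" "k < n"
      using n j Fx by simp
    have klab: "int k mod int d = (int j + (if b0 then - int i else int i)) mod int d"
    proof -
      have "int k mod int d = (int j + (if b0 then - int i' else int i')) mod int d"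
        using lab_mult[OF n Fx(2), of j b0 bx] k j Fx by simp
      also have "\<dots> = (int j + (if b0 then - int i else int i)) mod int d"
      proof -
        have e1: "(int j - int i') mod int d = (int j - int i) mod int d" by (metis Fx(3) mod_diff_right_eq)
        have e2: "(int j + int i') mod int d = (int j + int i) mod int d" by (metis Fx(3) mod_add_right_eq)
        show ?thesis by (cases b0) (simp_all add: e1 e2)
      qed
      finally show ?thesis .
    qed
    obtain k'' where k'': "F3 n d z = (k'', b0 \<noteq> bx)" "k'' < n" "int k'' mod int d = int k mod int d"
      using F3_carrier[OF n(1), of z d] F3_lab[OF n, of z] k by (cases "F3 n d z") auto
    obtain j'' where j'': "j'' < n" "int j'' mod int d = int j mod int d" "(j'', b0) \<otimes>\<^bsub>?D\<^esub> (i, bx) = (k'', b0 \<noteq> bx)"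
      using lemM[OF n xi(2) xi(2) k''(2) refl, of j b0 bx] k''(3) klab by auto
    have "(j'', b0) \<in> W" using W j'' jn by auto
    moreover have "z = F3 n d ((j'', b0) \<otimes>\<^bsub>?D\<^esub> x)"
      using j''(3) k''(1) xi F3_invol[OF n, of z] k n by simp
    ultimately show "z \<in> F3 n d ` ((\<lambda>s. s \<otimes>\<^bsub>?D\<^esub> x) ` W)" by blast
  qed
qed

lemma S2_key:
  assumes n: "0 < n" "d dvd n" "d < n" and x: "x \<in> carrier (dihedral_group n)"
  shows "F3 n d ((d, False) \<otimes>\<^bsub>dihedral_group n\<^esub> x) = (n - d, False) \<otimes>\<^bsub>dihedral_group n\<^esub> F3 n d x"
proof -
  obtain i bx where xi: "x = (i, bx)" "i < n" using x by (cases x) auto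
  define k where "k = (d + i) mod n"
  have kint: "int k = (int d + int i) mod int n" by (simp add: k_def of_nat_mod)
  have kd: "int k mod int d = int i mod int d" using n by (simp add: kint mod_mod_cancel)
  have dn: "int d dvd int n" using n by simp
  have kd': "(- int k) mod int d = (- int i) mod int d"
  proof -
    have "(- int k) mod int d = (- (int d + int i)) mod int d" unfolding kint by (rule neg_modn_modd[OF dn])
    also have "\<dots> = (- int i) mod int d" by (simp add: mod_eq_dvd_iff)
    finally show ?thesis .
  qed
  have L: "F3 n d ((d, False) \<otimes>\<^bsub>dihedral_group n\<^esub> x) = (if bx then psi n d k else phi n d k, bx)"
    using xi by (simp add: F3_def k_def)
  have R: "(n - d, False) \<otimes>\<^bsub>dihedral_group n\<^esub> F3 n d x = ((n - d + (if bx then psi n d i else phi n d i)) mod n, bx)"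
    using xi by (simp add: F3_def)
  have "int (if bx then psi n d k else phi n d k) mod int n = int ((n - d + (if bx then psi n d i else phi n d i)) mod n) mod int n"
  proof (cases bx)
    case True
    have "int (psi n d k) = (- 2 * ((- int k) mod int d) - int k) mod int n" by (rule psi_int[OF n(1)])
    also have "\<dots> = (- 2 * ((- int i) mod int d) - int k) mod int n" by (simp only: kd')
    also have "\<dots> = (- 2 * ((- int i) mod int d) - ((int d + int i) mod int n)) mod int n" by (simp only: kint)
    finally have "int (psi n d k) = (- 2 * ((- int i) mod int d) - ((int d + int i) mod int n)) mod int n" .
    moreover have "int ((n - d + psi n d i) mod n) = (int n - int d + (- 2 * ((- int i) mod int d) - int i) mod int n) mod int n"
      using n by (simp add: of_nat_mod of_nat_diff psi_int) (simp add: algebra_simps)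
    ultimately show ?thesis using True
      by (simp add: mod_eq_dvd_iff) (simp add: minus_div_mult_eq_mod[symmetric] algebra_simps)
  next
    case False
    have "int (phi n d k) = (2 * (int k mod int d) - int k) mod int n" by (rule phi_int[OF n(1)])
    also have "\<dots> = (2 * (int i mod int d) - int k) mod int n" by (simp only: kd)
    also have "\<dots> = (2 * (int i mod int d) - ((int d + int i) mod int n)) mod int n" by (simp only: kint)
    finally have "int (phi n d k) = (2 * (int i mod int d) - ((int d + int i) mod int n)) mod int n" .
    moreover have "int ((n - d + phi n d i) mod n) = (int n - int d + (2 * (int i mod int d) - int i) mod int n) mod int n"
      using n by (simp add: of_nat_mod of_nat_diff phi_int) (simp add: algebra_simps)
    ultimately show ?thesis using False
      by (simp add: mod_eq_dvd_iff) (simp add: minus_div_mult_eq_mod[symmetric] algebra_simps)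
  qed
  then have "(if bx then psi n d k else phi n d k) = (n - d + (if bx then psi n d i else phi n d i)) mod n"
    using n phi_lt psi_lt by (intro nat_eq_modI[of _ n]) auto
  then show ?thesis unfolding L R by simp
qed

lemma S3_key:
  assumes n: "0 < n" "d dvd n" "h * d < n" and x: "x \<in> carrier (dihedral_group n)"
  shows "F3 n d ((h * d, True) \<otimes>\<^bsub>dihedral_group n\<^esub> x) = ((n - h * d) mod n, True) \<otimes>\<^bsub>dihedral_group n\<^esub> F3 n d x"
proof -
  obtain i bx where xi: "x = (i, bx)" "i < n" using x by (cases x) auto
  define k where "k = (h * d + (n - i) mod n) mod n"
  have kint: "int k = (int h * int d - int i) mod int n"
    using fst_mult_int[OF xi(2), of "h * d" True] by (simp add: k_def)
  have hd: "(int h * int d - int i) mod int d = (- int i) mod int d"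
    by (simp add: mod_eq_dvd_iff)
  have hd': "(int i - int h * int d) mod int d = int i mod int d"
    by (simp add: mod_eq_dvd_iff)
  have kd: "int k mod int d = (- int i) mod int d" using n by (simp add: kint mod_mod_cancel hd)
  have kd': "(- int k) mod int d = int i mod int d"
    using n by (simp add: kint neg_modn_modd hd')
  have L: "F3 n d ((h * d, True) \<otimes>\<^bsub>dihedral_group n\<^esub> x) = (if bx then phi n d k else psi n d k, \<not> bx)"
    using xi by (simp add: F3_def k_def)
  have R: "((n - h * d) mod n, True) \<otimes>\<^bsub>dihedral_group n\<^esub> F3 n d x =
      (((n - h * d) mod n + (n - (if bx then psi n d i else phi n d i)) mod n) mod n, \<not> bx)"
    using xi by (simp add: F3_def)
  have "int (if bx then phi n d k else psi n d k) mod int n =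
        int (((n - h * d) mod n + (n - (if bx then psi n d i else phi n d i)) mod n) mod n) mod int n"
  proof (cases bx)
    case True
    have "int (phi n d k) = (2 * (int k mod int d) - int k) mod int n" by (rule phi_int[OF n(1)])
    also have "\<dots> = (2 * ((- int i) mod int d) - int k) mod int n" by (simp only: kd)
    also have "\<dots> = (2 * ((- int i) mod int d) - ((int h * int d - int i) mod int n)) mod int n" by (simp only: kint)
    finally have "int (phi n d k) = (2 * ((- int i) mod int d) - ((int h * int d - int i) mod int n)) mod int n" .
    moreover have "int (((n - h * d) mod n + (n - psi n d i) mod n) mod n) =
        (- (int h * int d) - (- 2 * ((- int i) mod int d) - int i) mod int n) mod int n"
    proof -
      have "int (((n - h * d) mod n + (n - psi n d i) mod n) mod n) =
          (int ((n - h * d) mod n) + int ((n - psi n d i) mod n)) mod int n" by (simp add: of_nat_mod)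
      also have "\<dots> = ((- int (h * d)) mod int n + (- int (psi n d i)) mod int n) mod int n"
        using n psi_lt[OF n(1)] by (simp add: int_sub_mod0 less_imp_le)
      also have "\<dots> = (- (int h * int d) - (- 2 * ((- int i) mod int d) - int i) mod int n) mod int n"
        using n by (simp add: psi_int mod_simps) (simp add: algebra_simps)
      finally show ?thesis .
    qed
    ultimately show ?thesis using True
      by (simp add: mod_eq_dvd_iff) (simp add: minus_div_mult_eq_mod[symmetric] algebra_simps)
  next
    case False
    have "int (psi n d k) = (- 2 * ((- int k) mod int d) - int k) mod int n" by (rule psi_int[OF n(1)])
    also have "\<dots> = (- 2 * (int i mod int d) - int k) mod int n" by (simp only: kd')
    also have "\<dots> = (- 2 * (int i mod int d) - ((int h * int d - int i) mod int n)) mod int n" by (simp only: kint)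
    finally have "int (psi n d k) = (- 2 * (int i mod int d) - ((int h * int d - int i) mod int n)) mod int n" .
    moreover have "int (((n - h * d) mod n + (n - phi n d i) mod n) mod n) =
        (- (int h * int d) - (2 * (int i mod int d) - int i) mod int n) mod int n"
    proof -
      have "int (((n - h * d) mod n + (n - phi n d i) mod n) mod n) =
          (int ((n - h * d) mod n) + int ((n - phi n d i) mod n)) mod int n" by (simp add: of_nat_mod)
      also have "\<dots> = ((- int (h * d)) mod int n + (- int (phi n d i)) mod int n) mod int n"
        using n phi_lt[OF n(1)] by (simp add: int_sub_mod0 less_imp_le)
      also have "\<dots> = (- (int h * int d) - (2 * (int i mod int d) - int i) mod int n) mod int n"
        using n by (simp add: phi_int mod_simps) (simp add: algebra_simps)
      finally show ?thesis .
    qed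
    ultimately show ?thesis using False
      by (simp add: mod_eq_dvd_iff) (simp add: minus_div_mult_eq_mod[symmetric] algebra_simps)
  qed
  then have "(if bx then phi n d k else psi n d k) =
      ((n - h * d) mod n + (n - (if bx then psi n d i else phi n d i)) mod n) mod n"
    using n phi_lt psi_lt by (intro nat_eq_modI[of _ n]) auto
  then show ?thesis unfolding L R by simp
qed

lemma lt_pd: "(c::nat) < d \<Longrightarrow> h < p \<Longrightarrow> c + h * d < p * d"
proof -
  assume "c < d" "h < p"
  then have "c + h * d < d + h * d" by simp
  also have "\<dots> = (h + 1) * d" by simp
  also have "\<dots> \<le> p * d" using \<open>h < p\<close> by (intro mult_right_mono) auto
  finally show ?thesis .
qed

lemma card_coset:
  assumes d: "0 < d" and P: "Pn \<subseteq> {..<d}"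
  shows "card {(j, bb) | j. j < p * d \<and> j mod d \<in> Pn} = card Pn * p"
proof -
  have eq: "{(j, bb) | j. j < p * d \<and> j mod d \<in> Pn} = (\<lambda>(c, h). (c + h * d, bb)) ` (Pn \<times> {..<p})"
  proof (rule Set.set_eqI)
    fix z show "z \<in> {(j, bb) | j. j < p * d \<and> j mod d \<in> Pn} \<longleftrightarrow> z \<in> (\<lambda>(c, h). (c + h * d, bb)) ` (Pn \<times> {..<p})"
    proof
      assume "z \<in> {(j, bb) | j. j < p * d \<and> j mod d \<in> Pn}"
      then obtain j where j: "z = (j, bb)" "j < p * d" "j mod d \<in> Pn" by blast
      have "j div d < p" using j(2) d by (simp add: div_less_iff_less_mult mult.commute)
      moreover have "j = j mod d + (j div d) * d" by simp
      ultimately show "z \<in> (\<lambda>(c, h). (c + h * d, bb)) ` (Pn \<times> {..<p})"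
        using j by (intro image_eqI[of _ _ "(j mod d, j div d)"]) auto
    next
      assume "z \<in> (\<lambda>(c, h). (c + h * d, bb)) ` (Pn \<times> {..<p})"
      then obtain c h where ch: "z = (c + h * d, bb)" "c \<in> Pn" "h < p" by auto
      have "c < d" using ch P by auto
      then have "c + h * d < p * d" "(c + h * d) mod d = c" using ch lt_pd by auto
      then show "z \<in> {(j, bb) | j. j < p * d \<and> j mod d \<in> Pn}" using ch by auto
    qed
  qed
  have inj: "inj_on (\<lambda>(c, h). (c + h * d, bb)) (Pn \<times> {..<p})"
  proof (rule inj_onI, clarify)
    fix c h c' h' assume a: "c \<in> Pn" "h < p" "c' \<in> Pn" "h' < p" "c + h * d = c' + h' * d"
    have "c < d" "c' < d" using a P by auto
    then have "(c + h * d) mod d = c" "(c' + h' * d) mod d = c'" "(c + h * d) div d = h" "(c' + h' * d) div d = h'"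
      by auto
    then show "c = c' \<and> h = h'" using a(5) by metis
  qed
  have "finite Pn" using P finite_subset by blast
  then show ?thesis unfolding eq using card_image[OF inj] by (simp add: card_cartesian_product)
qed


lemma coset_int_eq: "{(j, b0) | j. j < n \<and> j mod d \<in> Pn} = {(j, b0) | j. j < n \<and> int j mod int d \<in> int ` Pn}"
  by (auto simp flip: of_nat_mod)

lemma podd_not_DCI:
  assumes p: "prime p" "p \<noteq> 2" and pn: "p * p dvd n" and n: "3 \<le> n"
    and m: "p + 1 \<le> m" "m \<le> n - 1"
  shows "\<not> has_m_DCI (dihedral_group n) m"
proof -
  let ?D = "dihedral_group n"
  define d where "d = n div p"
  have p3: "3 \<le> p" using p prime_ge_2_nat[OF p(1)] by linarith
  obtain e where e: "n = p * p * e" using pn by blast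
  have de: "d = p * e" using p3 e by (simp add: d_def)
  have nd: "n = p * d" using de e by simp
  have e0: "0 < e" using e n by (cases e) auto
  have d0: "0 < d" using de e0 p3 by simp
  have dp: "p \<le> d" using de e0 by simp
  have d2: "2 \<le> d" using dp p3 by simp
  have dn: "d < n" using nd d0 p3 by simp
  have ddvd: "d dvd n" using nd by simp
  have n0: "0 < n" using n by simp
  have ndd: "n dvd d * d" using nd de by (simp add: mult.assoc)
  define z where "z = m - p - 1"
  define q where "q = z div p"
  define r where "r = z mod p"
  have zqr: "z = q * p + r" by (simp add: q_def r_def)
  have rp: "r < p" using p3 by (simp add: r_def)
  have qd: "q < d"
  proof -
    have "z < (d - 1) * p" using m nd p3 dp by (simp add: z_def algebra_simps diff_mult_distrib)
    then have "q * p < (d - 1) * p" using zqr by linarith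
    then have "q < d - 1" by (simp add: mult_less_cancel2)
    then show ?thesis by simp
  qed
  define S1 where "S1 = {(j, False) | j. j < n \<and> j mod d \<in> {1}}"
  define S3 where "S3 = (\<lambda>h. (h * d, True)) ` {..<r}"
  define S4 where "S4 = {(j, True) | j. j < n \<and> j mod d \<in> {1..q}}"
  define T3 where "T3 = (\<lambda>h. ((n - h * d) mod n, True)) ` {..<r}"
  define S where "S = S1 \<union> {(d, False)} \<union> S3 \<union> S4"
  define T where "T = S1 \<union> {(n - d, False)} \<union> T3 \<union> S4"
  have cS1: "card S1 = p" unfolding S1_def nd using card_coset[OF d0, where Pn="{1}" and p=p and bb=False] d2 by simp
  have qsub: "{1..q} \<subseteq> {..<d}" using qd by auto
  have cS4: "card S4 = q * p" unfolding S4_def nd using card_coset[OF d0 qsub, where p=p and bb=True] by simp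
  have cS3: "card S3 = r" unfolding S3_def using d0 by (subst card_image) (auto simp: inj_on_def)
  have fS1: "finite S1" using cS1 p3 card.infinite by fastforce
  have fS4: "finite S4" unfolding S4_def by (rule finite_subset[of _ "{..<n} \<times> UNIV"]) auto
  have fS3: "finite S3" unfolding S3_def by simp
  have hdn: "h * d < n" if "h < r" for h using that rp nd lt_pd[OF d0, of h p] by simp
  have cardS: "card S = m"
  proof -
    have "card S = card (S1 \<union> {(d, False)} \<union> S3) + card S4"
      unfolding S_def using fS1 fS3 fS4 by (intro card_Un_disjoint) (auto simp: S1_def S3_def S4_def)
    also have "card (S1 \<union> {(d, False)} \<union> S3) = card (S1 \<union> {(d, False)}) + card S3"
      using fS1 fS3 by (intro card_Un_disjoint) (auto simp: S1_def S3_def)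
    also have "card (S1 \<union> {(d, False)}) = card S1 + 1"
      using fS1 by (subst card_Un_disjoint) (auto simp: S1_def)
    finally show ?thesis using cS1 cS3 cS4 zqr m by (simp add: z_def)
  qed
  have Scar: "S \<subseteq> carrier ?D" using dn hdn by (auto simp: S_def S1_def S3_def S4_def)
  have S1n: "\<one>\<^bsub>?D\<^esub> \<notin> S" using d0 by (auto simp: S_def S1_def S3_def S4_def)
  have Tcar: "T \<subseteq> carrier ?D" using dn n0 d0 by (auto simp: T_def S1_def T3_def S4_def)
  have T1n: "\<one>\<^bsub>?D\<^esub> \<notin> T" using d0 dn by (auto simp: T_def S1_def T3_def S4_def)
  have Fbij: "bij_betw (F3 n d) (carrier ?D) (carrier ?D)"
  proof (rule bij_invol)
    fix x assume "x \<in> carrier ?D" then show "F3 n d x \<in> carrier ?D" by (rule F3_carrier[OF n0])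
  next
    fix x assume "x \<in> carrier ?D" then show "F3 n d (F3 n d x) = x" by (rule F3_invol[OF n0 ddvd])
  qed
  have key: "F3 n d ` ((\<lambda>s. s \<otimes>\<^bsub>?D\<^esub> x) ` S) = (\<lambda>t. t \<otimes>\<^bsub>?D\<^esub> F3 n d x) ` T"
    if x: "x \<in> carrier ?D" for x
  proof -
    have k1: "F3 n d ` ((\<lambda>s. s \<otimes>\<^bsub>?D\<^esub> x) ` S1) = (\<lambda>t. t \<otimes>\<^bsub>?D\<^esub> F3 n d x) ` S1"
    proof -
      have "S1 = {(j, False) | j. j < n \<and> int j mod int d \<in> int ` {1}}" unfolding S1_def by (rule coset_int_eq)
      then show ?thesis by (rule sat_key[OF n0 ddvd x])
    qed
    have k4: "F3 n d ` ((\<lambda>s. s \<otimes>\<^bsub>?D\<^esub> x) ` S4) = (\<lambda>t. t \<otimes>\<^bsub>?D\<^esub> F3 n d x) ` S4"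
    proof -
      have "S4 = {(j, True) | j. j < n \<and> int j mod int d \<in> int ` {1..q}}" unfolding S4_def by (rule coset_int_eq)
      then show ?thesis by (rule sat_key[OF n0 ddvd x])
    qed
    have k2: "F3 n d ` ((\<lambda>s. s \<otimes>\<^bsub>?D\<^esub> x) ` {(d, False)}) = (\<lambda>t. t \<otimes>\<^bsub>?D\<^esub> F3 n d x) ` {(n - d, False)}"
      using S2_key[OF n0 ddvd dn x] by simp
    have k3: "F3 n d ` ((\<lambda>s. s \<otimes>\<^bsub>?D\<^esub> x) ` S3) = (\<lambda>t. t \<otimes>\<^bsub>?D\<^esub> F3 n d x) ` T3"
    proof -
      have "F3 n d ` ((\<lambda>s. s \<otimes>\<^bsub>?D\<^esub> x) ` S3) = (\<lambda>h. F3 n d ((h * d, True) \<otimes>\<^bsub>?D\<^esub> x)) ` {..<r}"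
        unfolding S3_def by (simp add: image_image)
      also have "\<dots> = (\<lambda>h. ((n - h * d) mod n, True) \<otimes>\<^bsub>?D\<^esub> F3 n d x) ` {..<r}"
        using S3_key[OF n0 ddvd hdn x] by (intro image_cong) auto
      also have "\<dots> = (\<lambda>t. t \<otimes>\<^bsub>?D\<^esub> F3 n d x) ` T3"
        unfolding T3_def by (simp add: image_image)
      finally show ?thesis .
    qed
    show ?thesis unfolding S_def T_def image_Un using k1 k2 k3 k4 by simp
  qed
  have iso: "cayley_digraph_iso ?D S T"
  proof (rule cay_iso_intro[OF Fbij Scar])
    fix x y assume "x \<in> carrier ?D" "y \<in> carrier ?D"
    then show "x \<otimes>\<^bsub>?D\<^esub> y \<in> carrier ?D" using n0 by (cases x; cases y) auto
  next
    fix x assume "x \<in> carrier ?D" then show "F3 n d ` ((\<lambda>s. s \<otimes>\<^bsub>?D\<^esub> x) ` S) = (\<lambda>t. t \<otimes>\<^bsub>?D\<^esub> F3 n d x) ` T"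
      by (rule key)
  qed
  have noiso: "\<alpha> ` S \<noteq> T" if a: "\<alpha> \<in> iso ?D ?D" for \<alpha>
  proof
    assume eq: "\<alpha> ` S = T"
    obtain v where v: "v < n" "\<forall>i<n. \<alpha> (i, False) = (v * i mod n, False)" using iso_D_rot[OF n a] by blast
    have Trot: "a < n \<and> a mod d = 1 \<or> a = n - d" if "(a, False) \<in> T" for a
      using that by (auto simp: T_def S1_def T3_def S4_def)
    have "(1, False) \<in> S" using d2 n by (auto simp: S_def S1_def)
    moreover have "\<alpha> (1, False) = (v, False)" using v n by simp
    ultimately have "(v, False) \<in> T" using eq by (metis image_eqI)
    then have vc: "v mod d = 1 \<or> v = n - d" using Trot by blast
    have "(d, False) \<in> S" by (simp add: S_def)
    moreover have "\<alpha> (d, False) = (v * d mod n, False)" using v dn by simp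
    ultimately have "(v * d mod n, False) \<in> T" using eq by (metis image_eqI)
    then have vd: "v * d mod n mod d = 1 \<or> v * d mod n = n - d" using Trot by blast
    have "v * d mod n mod d = 0" using ddvd by (simp add: mod_mod_cancel)
    then have vd': "v * d mod n = n - d" using vd by simp
    show False
    proof (cases "v = n - d")
      case True
      have "n dvd (n - d) * d"
      proof -
        have "(n - d) * d + d * d = n * d" using dn by (simp add: algebra_simps diff_mult_distrib)
        then show ?thesis using ndd by (metis dvd_add_left_iff dvd_triv_left)
      qed
      then have "v * d mod n = 0" using True by simp
      then show False using vd' dn by simp
    next
      case False
      then have v1: "v mod d = 1" using vc by simp
      have "v * d = d * d * (v div d) + d"
      proof -
        have "v = d * (v div d) + 1" using v1 by (metis mult_div_mod_eq)
        then have "v * d = (d * (v div d) + 1) * d" by simp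
        then show ?thesis by (simp add: algebra_simps)
      qed
      moreover have z0: "d * d * (v div d) mod n = 0" using dvd_mult2[OF ndd, of "v div d"] by simp
      then have "(d * d * (v div d) + d) mod n = d mod n" by (metis add_0 mod_add_left_eq)
      ultimately have "v * d mod n = d mod n" by simp
      then have "d = n - d" using vd' dn by simp
      then have "n = 2 * d" using dn by simp
      then have "p = 2" using nd d0 by simp
      then show False using p by simp
    qed
  qed
  show ?thesis by (rule not_DCI[OF Scar S1n cardS Tcar T1n iso noiso])
qed

lemma prime_order_iso:
  assumes gG: "group G" and pc: "card (carrier G) = p" and pp: "prime p"
  shows "G \<cong> integer_mod_group p"
proof -
  interpret G: group G by fact
  have p2: "2 \<le> p" using prime_ge_2_nat[OF pp] .
  have fin: "finite (carrier G)" using pc p2 card.infinite by fastforce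
  have ordG: "order G = p" using pc by (simp add: order_def)
  obtain g where g: "g \<in> carrier G" "g \<noteq> \<one>\<^bsub>G\<^esub>"
  proof -
    have "carrier G - {\<one>\<^bsub>G\<^esub>} \<noteq> {}"
    proof
      assume "carrier G - {\<one>\<^bsub>G\<^esub>} = {}"
      then have "carrier G \<subseteq> {\<one>\<^bsub>G\<^esub>}" by auto
      then have "card (carrier G) \<le> card {\<one>\<^bsub>G\<^esub>}" by (intro card_mono) auto
      then show False using pc p2 by simp
    qed
    then show ?thesis using that by blast
  qed
  have ordg: "G.ord g = p"
  proof -
    have "G.ord g dvd p" using G.ord_dvd_group_order[OF g(1)] ordG by simp
    then have "G.ord g = 1 \<or> G.ord g = p" using pp by (simp add: prime_nat_iff)
    moreover have "G.ord g \<noteq> 1" using G.ord_eq_1[OF g(1)] g(2) by simp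
    ultimately show ?thesis by simp
  qed
  define h where "h = (\<lambda>k::int. g [^]\<^bsub>G\<^esub> k)"
  have hc: "h k \<in> carrier G" for k unfolding h_def using g(1) by simp
  have heq: "h a = h b \<longleftrightarrow> int p dvd (b - a)" for a b
    unfolding h_def using G.int_pow_eq[OF g(1), of a b] ordg by simp
  have hom: "h \<in> hom (integer_mod_group p) G"
  proof (rule homI)
    fix x show "h x \<in> carrier G" by (rule hc)
  next
    fix x y assume "x \<in> carrier (integer_mod_group p)" "y \<in> carrier (integer_mod_group p)"
    have "h ((x + y) mod int p) = h (x + y)"
      unfolding heq by (simp add: mod_eq_dvd_iff[symmetric] )
    also have "\<dots> = h x \<otimes>\<^bsub>G\<^esub> h y" unfolding h_def using G.int_pow_mult[OF g(1)] by simp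
    finally show "h (x \<otimes>\<^bsub>integer_mod_group p\<^esub> y) = h x \<otimes>\<^bsub>G\<^esub> h y" by simp
  qed
  have carZ: "carrier (integer_mod_group p) = {0..<int p}" using p2 by (simp add: carrier_integer_mod_group)
  have inj: "inj_on h (carrier (integer_mod_group p))"
  proof (rule inj_onI)
    fix a b assume a: "a \<in> carrier (integer_mod_group p)" and b: "b \<in> carrier (integer_mod_group p)" and e: "h a = h b"
    have dv: "int p dvd (b - a)" using e heq by simp
    show "a = b"
    proof (rule ccontr)
      assume "a \<noteq> b"
      then have "0 < \<bar>b - a\<bar>" by simp
      moreover have "\<bar>b - a\<bar> < int p" using a b carZ by auto
      moreover have "int p dvd \<bar>b - a\<bar>" using dv by simp
      ultimately show False using zdvd_not_zless by blast
    qed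
  qed
  have img: "h ` carrier (integer_mod_group p) = carrier G"
  proof (rule card_subset_eq[OF fin])
    show "h ` carrier (integer_mod_group p) \<subseteq> carrier G" using hc by auto
    show "card (h ` carrier (integer_mod_group p)) = card (carrier G)"
      using card_image[OF inj] carZ pc by simp
  qed
  have "h \<in> iso (integer_mod_group p) G" using hom inj img by (simp add: iso_def bij_betw_def)
  then have "integer_mod_group p \<cong> G" by (auto simp: is_iso_def)
  then show ?thesis by (rule group.iso_sym[OF group_integer_mod_group])
qed

theorem lemma3p4:
  fixes n m p :: nat and P :: "(nat \<times> bool) set"
  assumes "n \<ge> 3" and "m > 0"
    and "has_m_DCI (dihedral_group n) m"
    and "prime p" and "p dvd 2 * n"
    and "p + 1 \<le> m" and "m \<le> n - 1"
    and "sylow_subgroup (dihedral_group n) p P"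
  shows "(dihedral_group n)\<lparr>carrier := P\<rparr> \<cong> integer_mod_group p"
proof -
  let ?D = "dihedral_group n"
  have n0: "0 < n" using assms(1) by simp
  have gD: "group ?D" using group_D[OF n0] .
  have ordD: "order ?D = 2 * n" by (simp add: order_def card_cartesian_product)
  have p2: "2 \<le> p" using prime_ge_2_nat[OF assms(4)] .
  have nsq: "\<not> p * p dvd 2 * n"
  proof
    assume pp: "p * p dvd 2 * n"
    show False
    proof (cases "p = 2")
      case True
      then have "even n" using pp by simp
      then have "4 \<le> n" using assms(1) by presburger
      then show False using p2_not_DCI[of n m] \<open>even n\<close> assms True by simp
    next
      case False
      have "odd p"
      proof
        assume "even p"
        then have "2 dvd p" by simp
        moreover have "\<forall>m. m dvd p \<longrightarrow> m = 1 \<or> m = p" using assms(4) by (simp add: prime_nat_iff)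
        ultimately have "(2::nat) = 1 \<or> 2 = p" by blast
        then show False using False by simp
      qed
      then have "coprime (p * p) 2" by simp
      then have "p * p dvd n" using pp coprime_dvd_mult_right_iff by blast
      then show False using podd_not_DCI[OF assms(4) False _ assms(1) assms(6) assms(7)] assms(3) by blast
    qed
  qed
  obtain k where sub: "subgroup P ?D" and k: "card P = p ^ k" "p ^ k dvd order ?D" "\<not> p ^ Suc k dvd order ?D"
    using assms(8) unfolding sylow_subgroup_def by blast
  have "k \<noteq> 0" using k(3) assms(5) ordD by (cases k) auto
  moreover have "\<not> 2 \<le> k"
  proof
    assume "2 \<le> k"
    then have "p ^ 2 dvd p ^ k" by (rule le_imp_power_dvd)
    then have "p * p dvd 2 * n" using k(2) ordD by (simp add: power2_eq_square dvd_trans)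
    then show False using nsq by simp
  qed
  ultimately have "k = 1" by simp
  then have cP: "card P = p" using k by simp
  have "group (?D\<lparr>carrier := P\<rparr>)" using subgroup.subgroup_is_group[OF sub gD] .
  moreover have "card (carrier (?D\<lparr>carrier := P\<rparr>)) = p" using cP by simp
  ultimately show ?thesis using prime_order_iso assms(4) by blast
qed

end
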